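(* Consider the one-dimensional scalar conservation law $u_t+f(u)_x=0$ on $\Omega=[a,b]$ with periodic (or compactly supported) boundary conditions, and let $u_h(\cdot,t)\in V_h^k$ be the solution of the semi-discrete NOES-DG scheme described in the context. If for every cell $K_i$ the quantities satisfy $$\max\left\{\frac{F_i}{E_i},0\right\}<C\,\sigma_i^{jump},$$ then the scheme is entropy stable in the sense that $$\int_\Omega \partial_t u_h\, v_h\,\mathrm dx\le 0 .$$
   Context: Mesh: $a=x_{1/2}<x_{3/2}<\dots<x_{N+1/2}=b$, uniform, cells $K_i=[x_{i-1/2},x_{i+1/2}]$, $h=x_{i+1/2}-x_{i-1/2}$, midpoint $x_i$. For $k\ge 1$, $V_h^k=\{w: w|_{K_i}\in P^k(K_i)\ \forall i\}$. For $w\in V_h^k$, $w^{-}_{i+1/2}$ and $w^{+}_{i+1/2}$ denote the traces of $w$ at $x_{i+1/2}$ from $K_i$ and $K_{i+1}$, $[\![w]\!]_{i+1/2}=w^+_{i+1/2}-w^-_{i+1/2}$; with periodic boundary conditions cell indices are taken modulo $N$ (with compactly supported data the boundary flux contributions vanish). Entropy pair $(U,F)$: $U$ convex, $F'(u)=U'(u)f'(u)$; entropy variable $v(u)=U'(u)$ and $A(u)=U''(u)^{-1}\ge 0$. Numerical flux: local Lax–Friedrichs $\hat f(u^-,u^+)=\tfrac12[f(u^+)+f(u^-)]-\tfrac12\alpha(u^+-u^-)$, $\alpha=\max_{u \text{ between } u^-,u^+}|f'(u)|$, split as $\hat f=\hat f^C+\hat f^D$ with $\hat f^C=\tfrac12(f(u^+)+f(u^-))$,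 $\hat f^D=-\tfrac12\alpha(u^+-u^-)$; $\hat f_{i+1/2}=\hat f(u_h|^-_{i+1/2},u_h|^+_{i+1/2})$. Numerical entropy flux $\hat F(u^-,u^+)=\tfrac12(F(u^+)+F(u^-))$, $\hat F_{i+1/2}=\hat F(u_h|^-_{i+1/2},u_h|^+_{i+1/2})$. NOES-DG scheme: find $u_h(\cdot,t)\in V_h^k$ such that for all $w\in V_h^k$ and all $i$, $$\int_{K_i}\partial_t u_h\,w\,\mathrm dx=\int_{K_i}f(u_h)\,\partial_x w\,\mathrm dx-\hat f_{i+1/2}w^-_{i+1/2}+\hat f_{i-1/2}w^+_{i-1/2}-\sigma_i\int_{K_i}\nu_i\,\partial_x v_h\,A(u_h)\,\partial_x w\,\mathrm dx,$$ where $\nu_i(x)=1-\big(\tfrac{x-x_i}{h/2}\big)^2$, $v_h\in V_h^k$ is on each cell the degree-$k$ interpolant of $v(u_h)$ at the $k+1$ Gauss–Lobatto points of $K_i$ (so $v_h|^-_{i+1/2}=v(u_h|^-_{i+1/2})$ and $v_h|^+_{i-1/2}=v(u_h|^+_{i-1/2})$), and $\sigma_i=\max\{\sigma_i^{jump},\sigma_i^{entropy}\}$ with $\sigma_i^{jump}=c_f\big(h\|[\![u_h]\!]\|_{\partial K_i}+\sum_{l=1}^k l(l+1)h^{l+1}\|[\![\partial_x^l u_h]\!]\|_{\partial K_i}\big)$, $\|[\![\partial_x^lu_h]\!]\|_{\partial K_i}=|[\![\partial_x^lu_h]\!]_{i-1/2}|+|[\![\partial_x^lu_h]\!]_{i+1/2}|$,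 $c_f=c_0\max_{x\in K_i}|f'(u_h(x))|$ with a constant $c_0>0$; $\sigma_i^{entropy}=\min\{\max\{F_i/E_i,0\},\,C\sigma_i^{jump}\}$ with a constant $C>1$, where $E_i=\int_{K_i}\nu_i\,\partial_xv_h\,A(u_h)\,\partial_xv_h\,\mathrm dx$ and $F_i=\hat F_{i+1/2}-\hat F_{i-1/2}-\hat f^C_{i+1/2}v_h|^-_{i+1/2}+\hat f^C_{i-1/2}v_h|^+_{i-1/2}+\int_{K_i}f(u_h)\partial_xv_h\,\mathrm dx$. The integrals appearing in the scheme and those in $E_i$ and $F_i$ are evaluated in the same way (exactly, or with one and the same quadrature rule). *)

theory Defs
  imports "HOL-Analysis.Analysis" "HOL-Computational_Algebra.Polynomial"
begin

text \<open>Uniform periodic mesh on [a,b] with N cells, 0-based cell index i < N: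
  cell i = [xl i, xr i], right interface of cell i is "i+1/2", its left
  interface is the right interface of cell prv i (indices modulo N).
  A function in V_h^k is represented by its family of cell polynomials
  P :: nat => real poly (P i = restriction to cell i, degree <= k).\<close>

definition mesh_h :: "real \<Rightarrow> real \<Rightarrow> nat \<Rightarrow> real" where
  "mesh_h a b N = (b - a) / real N"

definition xl :: "real \<Rightarrow> real \<Rightarrow> nat \<Rightarrow> nat \<Rightarrow> real" where
  "xl a b N i = a + real i * mesh_h a b N"

definition xr :: "real \<Rightarrow> real \<Rightarrow> nat \<Rightarrow> nat \<Rightarrow> real" where
  "xr a b N i = a + real (Suc i) * mesh_h a b N"

definition xmid :: "real \<Rightarrow> real \<Rightarrow> nat \<Rightarrow> nat \<Rightarrow> real" where
  "xmid a b N i = a + (real i + 1/2) * mesh_h a b N"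

definition nxt :: "nat \<Rightarrow> nat \<Rightarrow> nat" where
  "nxt N i = Suc i mod N"

definition prv :: "nat \<Rightarrow> nat \<Rightarrow> nat" where
  "prv N i = (i + N - 1) mod N"

definition tr_minus :: "real \<Rightarrow> real \<Rightarrow> nat \<Rightarrow> (nat \<Rightarrow> real poly) \<Rightarrow> nat \<Rightarrow> real" where
  "tr_minus a b N P i = poly (P i) (xr a b N i)"

definition tr_plus :: "real \<Rightarrow> real \<Rightarrow> nat \<Rightarrow> (nat \<Rightarrow> real poly) \<Rightarrow> nat \<Rightarrow> real" where
  "tr_plus a b N P i = poly (P (nxt N i)) (xl a b N (nxt N i))"

definition jump :: "real \<Rightarrow> real \<Rightarrow> nat \<Rightarrow> (nat \<Rightarrow> real poly) \<Rightarrow> nat \<Rightarrow> real" where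
  "jump a b N P i = tr_plus a b N P i - tr_minus a b N P i"

definition lf_alpha :: "(real \<Rightarrow> real) \<Rightarrow> real \<Rightarrow> real \<Rightarrow> real" where
  "lf_alpha f' um up = Sup ((\<lambda>u. \<bar>f' u\<bar>) ` {min um up..max um up})"

definition flux_C :: "(real \<Rightarrow> real) \<Rightarrow> real \<Rightarrow> real \<Rightarrow> real" where
  "flux_C f um up = (f up + f um) / 2"

definition flux_D :: "(real \<Rightarrow> real) \<Rightarrow> real \<Rightarrow> real \<Rightarrow> real" where
  "flux_D f' um up = - (lf_alpha f' um up / 2) * (up - um)"

definition lf_flux :: "(real \<Rightarrow> real) \<Rightarrow> (real \<Rightarrow> real) \<Rightarrow> real \<Rightarrow> real \<Rightarrow> real" where
  "lf_flux f f' um up = (f up + f um) / 2 - (lf_alpha f' um up / 2) * (up - um)"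

definition ent_flux :: "(real \<Rightarrow> real) \<Rightarrow> real \<Rightarrow> real \<Rightarrow> real" where
  "ent_flux F um up = (F up + F um) / 2"

definition nu :: "real \<Rightarrow> real \<Rightarrow> nat \<Rightarrow> nat \<Rightarrow> real \<Rightarrow> real" where
  "nu a b N i x = 1 - ((x - xmid a b N i) / (mesh_h a b N / 2)) ^ 2"

definition visc_int :: "real \<Rightarrow> real \<Rightarrow> nat \<Rightarrow> (real \<Rightarrow> real) \<Rightarrow> (nat \<Rightarrow> real poly)
    \<Rightarrow> (nat \<Rightarrow> real poly) \<Rightarrow> nat \<Rightarrow> real poly \<Rightarrow> real" where
  "visc_int a b N A P V i w =
     integral {xl a b N i..xr a b N i}
       (\<lambda>x. nu a b N i x * poly (pderiv (V i)) x * A (poly (P i) x) * poly (pderiv w) x)"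

definition E_cell :: "real \<Rightarrow> real \<Rightarrow> nat \<Rightarrow> (real \<Rightarrow> real) \<Rightarrow> (nat \<Rightarrow> real poly)
    \<Rightarrow> (nat \<Rightarrow> real poly) \<Rightarrow> nat \<Rightarrow> real" where
  "E_cell a b N A P V i = visc_int a b N A P V i (V i)"

definition F_cell :: "real \<Rightarrow> real \<Rightarrow> nat \<Rightarrow> (real \<Rightarrow> real) \<Rightarrow> (real \<Rightarrow> real)
    \<Rightarrow> (nat \<Rightarrow> real poly) \<Rightarrow> (nat \<Rightarrow> real poly) \<Rightarrow> nat \<Rightarrow> real" where
  "F_cell a b N f F P V i =
     ent_flux F (tr_minus a b N P i) (tr_plus a b N P i)
     - ent_flux F (tr_minus a b N P (prv N i)) (tr_plus a b N P (prv N i))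
     - flux_C f (tr_minus a b N P i) (tr_plus a b N P i) * poly (V i) (xr a b N i)
     + flux_C f (tr_minus a b N P (prv N i)) (tr_plus a b N P (prv N i)) * poly (V i) (xl a b N i)
     + integral {xl a b N i..xr a b N i} (\<lambda>x. f (poly (P i) x) * poly (pderiv (V i)) x)"

definition sigma_jump :: "real \<Rightarrow> real \<Rightarrow> nat \<Rightarrow> nat \<Rightarrow> real \<Rightarrow> (real \<Rightarrow> real)
    \<Rightarrow> (nat \<Rightarrow> real poly) \<Rightarrow> nat \<Rightarrow> real" where
  "sigma_jump a b N k c0 f' P i =
     (c0 * Sup ((\<lambda>x. \<bar>f' (poly (P i) x)\<bar>) ` {xl a b N i..xr a b N i})) *
     (mesh_h a b N * (\<bar>jump a b N P (prv N i)\<bar> + \<bar>jump a b N P i\<bar>)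
      + (\<Sum>l = 1..k. real l * real (l + 1) * mesh_h a b N ^ (l + 1) *
          (\<bar>jump a b N (\<lambda>j. (pderiv ^^ l) (P j)) (prv N i)\<bar>
           + \<bar>jump a b N (\<lambda>j. (pderiv ^^ l) (P j)) i\<bar>)))"

definition sigma_entropy :: "real \<Rightarrow> real \<Rightarrow> nat \<Rightarrow> nat \<Rightarrow> real \<Rightarrow> real
    \<Rightarrow> (real \<Rightarrow> real) \<Rightarrow> (real \<Rightarrow> real) \<Rightarrow> (real \<Rightarrow> real) \<Rightarrow> (real \<Rightarrow> real)
    \<Rightarrow> (nat \<Rightarrow> real poly) \<Rightarrow> (nat \<Rightarrow> real poly) \<Rightarrow> nat \<Rightarrow> real" where
  "sigma_entropy a b N k c0 C f f' F A P V i =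
     min (max (F_cell a b N f F P V i / E_cell a b N A P V i) 0)
         (C * sigma_jump a b N k c0 f' P i)"

definition sigma_cell :: "real \<Rightarrow> real \<Rightarrow> nat \<Rightarrow> nat \<Rightarrow> real \<Rightarrow> real
    \<Rightarrow> (real \<Rightarrow> real) \<Rightarrow> (real \<Rightarrow> real) \<Rightarrow> (real \<Rightarrow> real) \<Rightarrow> (real \<Rightarrow> real)
    \<Rightarrow> (nat \<Rightarrow> real poly) \<Rightarrow> (nat \<Rightarrow> real poly) \<Rightarrow> nat \<Rightarrow> real" where
  "sigma_cell a b N k c0 C f f' F A P V i =
     max (sigma_jump a b N k c0 f' P i) (sigma_entropy a b N k c0 C f f' F A P V i)"

definition scheme_rhs :: "real \<Rightarrow> real \<Rightarrow> nat \<Rightarrow> nat \<Rightarrow> real \<Rightarrow> real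
    \<Rightarrow> (real \<Rightarrow> real) \<Rightarrow> (real \<Rightarrow> real) \<Rightarrow> (real \<Rightarrow> real) \<Rightarrow> (real \<Rightarrow> real)
    \<Rightarrow> (nat \<Rightarrow> real poly) \<Rightarrow> (nat \<Rightarrow> real poly) \<Rightarrow> nat \<Rightarrow> real poly \<Rightarrow> real" where
  "scheme_rhs a b N k c0 C f f' F A P V i w =
     integral {xl a b N i..xr a b N i} (\<lambda>x. f (poly (P i) x) * poly (pderiv w) x)
     - lf_flux f f' (tr_minus a b N P i) (tr_plus a b N P i) * poly w (xr a b N i)
     + lf_flux f f' (tr_minus a b N P (prv N i)) (tr_plus a b N P (prv N i)) * poly w (xl a b N i)
     - sigma_cell a b N k c0 C f f' F A P V i * visc_int a b N A P V i w"

text \<open>The k+1 Gauss-Lobatto points on the reference cell [-1,1]: the roots of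
  (1 - xi^2) L_k'(xi), L_k the Legendre polynomial, written via Rodrigues' formula
  (L_k is a nonzero multiple of the k-th derivative of (xi^2-1)^k).\<close>
definition gl_nodes :: "nat \<Rightarrow> real set" where
  "gl_nodes k = {\<xi>. poly ([:1, 0, -1:] * (pderiv ^^ (Suc k)) ([:-1, 0, 1:] ^ k)) \<xi> = 0}"

end

theory Submission
  imports Defs
begin

lemma v_mono:
  fixes U v :: "real \<Rightarrow> real"
  assumes cv: "convex_on UNIV U" and d: "\<forall>u. (U has_real_derivative v u) (at u)"
    and xy: "x \<le> y"
  shows "v x \<le> v y"
proof (cases "x = y")
  case True then show ?thesis by simp
next
  case False
  then have lt: "x < y" using xy by simp
  have 1: "U y - U x \<ge> v x * (y - x)"
    by (rule convex_on_imp_above_tangent[OF cv]) (auto simp: d)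
  have 2: "U x - U y \<ge> v y * (x - y)"
    by (rule convex_on_imp_above_tangent[OF cv]) (auto simp: d)
  have "v x * (y - x) \<le> v y * (y - x)" using 1 2 by (simp add: algebra_simps)
  then show ?thesis using lt by simp
qed

lemma U2_nonneg:
  fixes U v U2 :: "real \<Rightarrow> real"
  assumes cv: "convex_on UNIV U" and d: "\<forall>u. (U has_real_derivative v u) (at u)"
    and d2: "\<forall>u. (v has_real_derivative U2 u) (at u)"
  shows "U2 u \<ge> 0"
proof (rule mono_on_imp_deriv_nonneg[where A = UNIV and f = v and x = u])
  show "mono_on UNIV v" by (intro mono_onI v_mono[OF cv d])
qed (auto simp: d2)

lemma alpha_nonneg:
  assumes "continuous_on UNIV f'"
  shows "lf_alpha f' um up \<ge> 0"
proof -
  let ?S = "(\<lambda>u. \<bar>f' u\<bar>) ` {min um up..max um up}"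
  have c: "continuous_on {min um up..max um up} (\<lambda>u. \<bar>f' u\<bar>)"
    by (intro continuous_on_rabs continuous_on_subset[OF assms]) auto
  have "compact ?S" by (rule compact_continuous_image[OF c compact_Icc])
  then have "bdd_above ?S" by (intro bounded_imp_bdd_above compact_imp_bounded)
  moreover have "\<bar>f' um\<bar> \<in> ?S" by auto
  ultimately have "\<bar>f' um\<bar> \<le> Sup ?S" by (simp only: cSup_upper)
  then show ?thesis unfolding lf_alpha_def by linarith
qed

lemma prv_nxt:
  assumes "i < N" shows "nxt N (prv N i) = i" "prv N (nxt N i) = i" "prv N i < N"
proof -
  have N: "N > 0" using assms by simp
  show "nxt N (prv N i) = i" unfolding nxt_def prv_def
    using assms by (simp add: mod_Suc_eq)
  show "prv N (nxt N i) = i" unfolding nxt_def prv_def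
  proof (cases "Suc i = N")
    case True then show "(Suc i mod N + N - 1) mod N = i" by simp
  next
    case False then have "Suc i < N" using assms by simp
    then show "(Suc i mod N + N - 1) mod N = i" by simp
  qed
  show "prv N i < N" unfolding prv_def using N by simp
qed

lemma sum_prv:
  assumes "N > 0"
  shows "(\<Sum>i<N. g (prv N i)) = (\<Sum>i<N. (g i :: real))"
proof -
  have "bij_betw (prv N) {..<N} {..<N}"
    by (rule bij_betw_byWitness[where f' = "nxt N"]) (use prv_nxt in \<open>auto simp: image_subset_iff nxt_def\<close>)
  then show ?thesis by (rule sum.reindex_bij_betw)
qed

theorem theorem2p2:
  fixes a b T c0 C :: real and N k :: nat
    and f f' U v U2 A F :: "real \<Rightarrow> real"
    and Uh Vh :: "real \<Rightarrow> nat \<Rightarrow> real poly"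
    and Dt :: "real \<Rightarrow> nat \<Rightarrow> real \<Rightarrow> real"
  assumes ab: "a < b" and N: "0 < N" and k: "1 \<le> k"
    and c0: "0 < c0" and C: "1 < C" and T: "0 < T"
    and flux: "\<forall>u. (f has_real_derivative f' u) (at u)" "continuous_on UNIV f'"
    and entropy: "convex_on UNIV U"
      "\<forall>u. (U has_real_derivative v u) (at u)"
      "\<forall>u. (v has_real_derivative U2 u) (at u)"
      "\<forall>u. A u = inverse (U2 u)"
      "\<forall>u. (F has_real_derivative v u * f' u) (at u)"
    and space: "\<forall>s\<in>{0<..<T}. \<forall>i<N. degree (Uh s i) \<le> k"
    and time_deriv: "\<forall>s\<in>{0<..<T}. \<forall>i<N. \<forall>x\<in>{xl a b N i..xr a b N i}.
        ((\<lambda>\<tau>. poly (Uh \<tau> i) x) has_real_derivative Dt s i x) (at s)"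
    and interp: "\<forall>s\<in>{0<..<T}. \<forall>i<N. degree (Vh s i) \<le> k \<and>
        (\<forall>\<xi>\<in>gl_nodes k.
           poly (Vh s i) (xmid a b N i + mesh_h a b N / 2 * \<xi>)
           = v (poly (Uh s i) (xmid a b N i + mesh_h a b N / 2 * \<xi>)))"
    and scheme: "\<forall>s\<in>{0<..<T}. \<forall>W. (\<forall>j<N. degree (W j) \<le> k) \<longrightarrow>
        (\<forall>i<N. integral {xl a b N i..xr a b N i} (\<lambda>x. Dt s i x * poly (W i) x)
               = scheme_rhs a b N k c0 C f f' F A (Uh s) (Vh s) i (W i))"
    and hyp: "\<forall>s\<in>{0<..<T}. \<forall>i<N. E_cell a b N A (Uh s) (Vh s) i \<noteq> 0 \<and>
        max (F_cell a b N f F (Uh s) (Vh s) i / E_cell a b N A (Uh s) (Vh s) i) 0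
          < C * sigma_jump a b N k c0 f' (Uh s) i"
  shows "\<forall>s\<in>{0<..<T}.
     (\<Sum>i<N. integral {xl a b N i..xr a b N i} (\<lambda>x. Dt s i x * poly (Vh s i) x)) \<le> 0"
proof
  fix s assume s: "s \<in> {0<..<T}"
  define P where "P = Uh s"
  define V where "V = Vh s"
  define h where "h = mesh_h a b N"
  have h: "h > 0" using ab N unfolding h_def mesh_h_def by simp
  define um where "um j = tr_minus a b N P j" for j
  define up where "up j = tr_plus a b N P j" for j
  define fD where "fD j = flux_D f' (um j) (up j)" for j
  define EF where "EF j = ent_flux F (um j) (up j)" for j
  define Fc where "Fc i = F_cell a b N f F P V i" for i
  define Ec where "Ec i = E_cell a b N A P V i" for i
  define sg where "sg i = sigma_cell a b N k c0 C f f' F A P V i" for i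
  have vm: "\<And>x y. x \<le> y \<Longrightarrow> v x \<le> v y" using v_mono[OF entropy(1,2)] by blast
  have Anonneg: "\<And>u. A u \<ge> 0" using entropy(4) U2_nonneg[OF entropy(1,2,3)] by simp
  have one: "1 \<in> gl_nodes k" "-1 \<in> gl_nodes k" unfolding gl_nodes_def by simp_all
  have tr1: "poly (V i) (xr a b N i) = v (um i)" if i: "i < N" for i
  proof -
    have "poly (V i) (xmid a b N i + mesh_h a b N / 2 * 1) = v (poly (P i) (xmid a b N i + mesh_h a b N / 2 * 1))"
      using interp s i one unfolding P_def V_def by blast
    moreover have "xmid a b N i + mesh_h a b N / 2 * 1 = xr a b N i"
      unfolding xmid_def xr_def by (simp add: algebra_simps)
    ultimately show ?thesis unfolding um_def tr_minus_def by simp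
  qed
  have tr2: "poly (V i) (xl a b N i) = v (up (prv N i))" if i: "i < N" for i
  proof -
    have "poly (V i) (xmid a b N i + mesh_h a b N / 2 * (-1)) = v (poly (P i) (xmid a b N i + mesh_h a b N / 2 * (-1)))"
      using interp s i one unfolding P_def V_def by blast
    moreover have "xmid a b N i + mesh_h a b N / 2 * (-1) = xl a b N i"
      unfolding xmid_def xl_def by (simp add: algebra_simps)
    ultimately show ?thesis unfolding up_def tr_plus_def using prv_nxt[OF i] by simp
  qed
  have Epos: "Ec i \<ge> 0" if i: "i < N" for i
  proof -
    let ?g = "\<lambda>x. nu a b N i x * poly (pderiv (V i)) x * A (poly (P i) x) * poly (pderiv (V i)) x"
    have g: "?g x \<ge> 0" if x: "x \<in> {xl a b N i..xr a b N i}" for x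
    proof -
      define t where "t = (x - xmid a b N i) / (h / 2)"
      have "x - xmid a b N i \<le> h/2" "-(h/2) \<le> x - xmid a b N i"
        using x unfolding xl_def xr_def xmid_def h_def by (auto simp: algebra_simps)
      then have "t \<le> 1" "-1 \<le> t" unfolding t_def using h by (auto simp: field_simps)
      then have "0 \<le> (1 - t) * (1 + t)" by (intro mult_nonneg_nonneg) auto
      then have "nu a b N i x \<ge> 0" unfolding nu_def t_def[symmetric] h_def[symmetric]
        by (simp add: algebra_simps power2_eq_square)
      moreover have "?g x = nu a b N i x * A (poly (P i) x) * (poly (pderiv (V i)) x)^2"
        by (simp only: power2_eq_square ac_simps)
      moreover have "0 \<le> nu a b N i x * A (poly (P i) x) * (poly (pderiv (V i)) x)^2"
        using calculation(1) Anonneg by (intro mult_nonneg_nonneg) auto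
      ultimately show ?thesis by (simp only:)
    qed
    show ?thesis
    proof (cases "?g integrable_on {xl a b N i..xr a b N i}")
      case True
      then show ?thesis unfolding Ec_def E_cell_def visc_int_def by (rule integral_nonneg) (use g in auto)
    qed (simp add: Ec_def E_cell_def visc_int_def not_integrable_integral)
  qed
  have cell: "Fc i - sg i * Ec i \<le> 0" if i: "i < N" for i
  proof -
    have hy: "Ec i \<noteq> 0" "max (Fc i / Ec i) 0 < C * sigma_jump a b N k c0 f' P i"
      using hyp s i unfolding Fc_def Ec_def P_def V_def by auto
    have E: "Ec i > 0" using hy(1) Epos[OF i] by simp
    have "sg i \<ge> max (Fc i / Ec i) 0"
      unfolding sg_def sigma_cell_def sigma_entropy_def Fc_def[symmetric] Ec_def[symmetric]
      using hy(2) by simp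
    then have "sg i \<ge> Fc i / Ec i" by simp
    then have "sg i * Ec i \<ge> Fc i / Ec i * Ec i" using E by (intro mult_right_mono) auto
    then show ?thesis using E by simp
  qed
  have diss: "fD j * (v (up j) - v (um j)) \<le> 0" for j
  proof -
    have al: "lf_alpha f' (um j) (up j) \<ge> 0" by (rule alpha_nonneg[OF flux(2)])
    have "(up j - um j) * (v (up j) - v (um j)) \<ge> 0"
    proof (cases "um j \<le> up j")
      case True then show ?thesis using vm[OF True] by simp
    next
      case False then have "up j \<le> um j" by simp
      then show ?thesis using vm[of "up j" "um j"] by (simp add: mult_nonpos_nonpos)
    qed
    then have "0 \<le> lf_alpha f' (um j) (up j) / 2 * ((up j - um j) * (v (up j) - v (um j)))"
      using al by simp
    then show ?thesis unfolding fD_def flux_D_def by (simp add: algebra_simps)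
  qed
  have Vdeg: "\<forall>j<N. degree (V j) \<le> k" using interp s unfolding V_def by blast
  have rhs: "integral {xl a b N i..xr a b N i} (\<lambda>x. Dt s i x * poly (V i) x)
     = (Fc i - sg i * Ec i) - EF i + EF (prv N i)
       + fD i * (v (up i) - v (um i)) - fD i * v (up i) + fD (prv N i) * v (up (prv N i))"
    if i: "i < N" for i
  proof -
    have "integral {xl a b N i..xr a b N i} (\<lambda>x. Dt s i x * poly (V i) x)
        = scheme_rhs a b N k c0 C f f' F A P V i (V i)"
      using scheme s Vdeg i unfolding P_def V_def by blast
    also have "\<dots> = (Fc i - sg i * Ec i) - EF i + EF (prv N i)
       + fD i * (v (up i) - v (um i)) - fD i * v (up i) + fD (prv N i) * v (up (prv N i))"
      unfolding scheme_rhs_def Fc_def F_cell_def sg_def Ec_def E_cell_def EF_def fD_def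
        um_def[symmetric] up_def[symmetric] tr1[OF i] tr2[OF i] lf_flux_def flux_C_def flux_D_def
      by (simp add: field_simps)
    finally show ?thesis .
  qed
  have "(\<Sum>i<N. integral {xl a b N i..xr a b N i} (\<lambda>x. Dt s i x * poly (V i) x))
     = (\<Sum>i<N. (Fc i - sg i * Ec i) + fD i * (v (up i) - v (um i)))
       - (\<Sum>i<N. EF i) + (\<Sum>i<N. EF (prv N i))
       - (\<Sum>i<N. fD i * v (up i)) + (\<Sum>i<N. fD (prv N i) * v (up (prv N i)))"
    by (simp add: rhs sum.distrib sum_subtractf)
  also have "\<dots> = (\<Sum>i<N. (Fc i - sg i * Ec i) + fD i * (v (up i) - v (um i)))"
    using sum_prv[OF N, of EF] sum_prv[OF N, of "\<lambda>j. fD j * v (up j)"] by simp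
  also have "\<dots> \<le> 0" by (intro sum_nonpos) (use cell diss in \<open>auto intro: add_nonpos_nonpos\<close>)
  finally show "(\<Sum>i<N. integral {xl a b N i..xr a b N i} (\<lambda>x. Dt s i x * poly (Vh s i) x)) \<le> 0"
    unfolding V_def .
qed

end
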